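(* Fix $r\in\mathbb R$ and let $\rho>0$. For $\theta\in[0,\pi]$, the function $\theta\mapsto\Re\,g_0(\rho e^{i\theta},0,r)$ is decreasing where $$\cos\theta<\frac{1+\rho^2}{2\sqrt2\,\rho}$$ holds and increasing where it does not hold; for $\theta\in[\pi,2\pi]$ the opposite is true. Let $R>0$. For $\phi\in[0,\pi]$, the function $\phi\mapsto-\Re\,g_0(1-Re^{-i\phi},0,r)$ is decreasing where $Q>0$ and increasing where $Q<0$, where $$Q=6\sqrt2-4+(3\sqrt2+2)R^2+16r+4R^2r-8\sqrt2R(1+\sqrt2r)\cos\phi;$$ for $\phi\in[\pi,2\pi]$ the opposite is true. (Monotonicity is meant on intervals avoiding the points $0,\pm1$ where $g_0$ is singular.)
   Context: For $z\in\mathbb C\setminus\{0,1,-1\}$ and $s,r\in\mathbb R$, $$g_0(z,s,r)=\Big(\tfrac1{2\sqrt2}-\tfrac12-s+r\Big)\log z+\Big(\tfrac12-\tfrac1{2\sqrt2}-s\Big)\log(1-z)+\Big(\tfrac12+\tfrac1{2\sqrt2}+s\Big)\log(1+z)+(r-2s)\log(\sqrt2+1)-\tfrac{\log2}{2};$$ its real part does not depend on the choice of branches of the logarithms. *)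

theory Defs
  imports "HOL-Analysis.Analysis"
begin

text \<open>The function g_0(z,s,r), using the principal branch Ln of the complex logarithm
  (the real part is branch independent).\<close>
definition g0 :: "complex \<Rightarrow> real \<Rightarrow> real \<Rightarrow> complex" where
  "g0 z s r =
     complex_of_real (1 / (2 * sqrt 2) - 1/2 - s + r) * Ln z
   + complex_of_real (1/2 - 1 / (2 * sqrt 2) - s) * Ln (1 - z)
   + complex_of_real (1/2 + 1 / (2 * sqrt 2) + s) * Ln (1 + z)
   + complex_of_real ((r - 2 * s) * ln (sqrt 2 + 1) - ln 2 / 2)"

definition dec_where :: "(real \<Rightarrow> real) \<Rightarrow> (real \<Rightarrow> bool) \<Rightarrow> real \<Rightarrow> real \<Rightarrow> bool" where
  "dec_where f P a b \<longleftrightarrow>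
     (\<forall>x y. a \<le> x \<and> x < y \<and> y \<le> b \<and> (\<forall>t\<in>{x..y}. P t) \<longrightarrow> f y < f x)"

definition inc_where :: "(real \<Rightarrow> real) \<Rightarrow> (real \<Rightarrow> bool) \<Rightarrow> real \<Rightarrow> real \<Rightarrow> bool" where
  "inc_where f P a b \<longleftrightarrow>
     (\<forall>x y. a \<le> x \<and> x < y \<and> y \<le> b \<and> (\<forall>t\<in>{x..y}. P t) \<longrightarrow> f x < f y)"

end

theory Submission
  imports Defs
begin
lemma sc: "p * (p * (cos t * cos t)) + p * (p * (sin t * sin t)) = p * (p::real)"
  by (metis distrib_left mult.commute mult_1_right sin_cos_squared_add3)
lemma cm1: "(cmod (1 - of_real p * exp(\<i> * of_real t)))^2 = 1 + p^2 - 2*p*cos t"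
  apply (subst cmod_power2) using sc[of p t] by (simp add: Re_exp Im_exp power2_eq_square algebra_simps)
lemma cm2: "(cmod (1 + of_real p * exp(\<i> * of_real t)))^2 = 1 + p^2 + 2*p*cos t"
  apply (subst cmod_power2) using sc[of p t] by (simp add: Re_exp Im_exp power2_eq_square algebra_simps)
lemma cm1': "(cmod (1 - of_real p * exp(- \<i> * of_real t)))^2 = 1 + p^2 - 2*p*cos t"
  apply (subst cmod_power2) using sc[of p t] by (simp add: Re_exp Im_exp power2_eq_square algebra_simps)
lemma cm3: "(cmod (2 - of_real p * exp(- \<i> * of_real t)))^2 = 4 + p^2 - 4*p*cos t"
  apply (subst cmod_power2) using sc[of p t] by (simp add: Re_exp Im_exp power2_eq_square algebra_simps)
lemma cm0: "p > 0 \<Longrightarrow> cmod (of_real p * exp(\<i> * of_real t)) = p"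
  by (simp add: norm_mult)
lemma cm0': "p > 0 \<Longrightarrow> cmod (of_real p * exp(- \<i> * of_real t)) = p"
  by (simp add: norm_mult)
lemma lnc: "w \<noteq> 0 \<Longrightarrow> ln (cmod w) = ln ((cmod w)^2) / 2"
  by (simp add: ln_realpow)
lemma sq2: "1 / (2 * sqrt 2) = sqrt 2 / 4"
  by (simp add: field_simps)

lemma Reg0: assumes "z \<notin> {0, 1, -1::complex}"
  shows "Re (g0 z 0 r) = (sqrt 2 / 4 - 1/2 + r) * ln (cmod z) + (1/2 - sqrt 2 / 4) * ln (cmod (1 - z))
     + (1/2 + sqrt 2 / 4) * ln (cmod (1 + z)) + (r * ln (sqrt 2 + 1) - ln 2 / 2)"
proof -
  have "1 - z \<noteq> 0" "1 + z \<noteq> 0" "z \<noteq> 0" using assms by (auto simp: add_eq_0_iff)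
  then show ?thesis unfolding g0_def sq2 by (simp add: Re_Ln)
qed

lemma cos_pi_2pi: "pi \<le> x \<Longrightarrow> x < t \<Longrightarrow> t \<le> 2*pi \<Longrightarrow> cos x < cos t"
  using cos_monotone_minus_pi_0[of "x - 2*pi" "t - 2*pi"] by (simp add: cos_diff)

lemma mvt_dec: assumes "x < y" "\<And>t. x \<le> t \<Longrightarrow> t \<le> y \<Longrightarrow> (F has_real_derivative F' t) (at t)"
  "\<And>t. x < t \<Longrightarrow> t < y \<Longrightarrow> F' t < 0" shows "F y < F x"
proof -
  from MVT2[OF assms(1), of F F'] assms(2) obtain z where "x < z" "z < y" "F y - F x = (y - x) * F' z" by auto
  with assms(3)[of z] assms(1) show ?thesis by (smt (verit) mult_pos_neg)
qed
lemma mvt_inc: assumes "x < y" "\<And>t. x \<le> t \<Longrightarrow> t \<le> y \<Longrightarrow> (F has_real_derivative F' t) (at t)"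
  "\<And>t. x < t \<Longrightarrow> t < y \<Longrightarrow> F' t > 0" shows "F x < F y"
proof -
  from MVT2[OF assms(1), of F F'] assms(2) obtain z where "x < z" "z < y" "F y - F x = (y - x) * F' z" by auto
  with assms(3)[of z] assms(1) show ?thesis by (smt (verit) mult_pos_pos)
qed

lemma decI: assumes "\<And>x y t. a \<le> x \<Longrightarrow> x < y \<Longrightarrow> y \<le> b \<Longrightarrow> \<forall>u\<in>{x..y}. P u \<Longrightarrow> x < t \<Longrightarrow> t < y \<Longrightarrow> F' t < 0"
  "\<And>t. P t \<Longrightarrow> f t = F t" "\<And>t. P t \<Longrightarrow> (F has_real_derivative F' t) (at t)"
  shows "dec_where f P a b"
  unfolding dec_where_def
proof (intro allI impI)
  fix x y assume h: "a \<le> x \<and> x < y \<and> y \<le> b \<and> (\<forall>t\<in>{x..y}. P t)"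
  have "F y < F x" by (rule mvt_dec[of x y F F']) (use h assms in auto)
  moreover have "f x = F x" "f y = F y" using h assms(2) by auto
  ultimately show "f y < f x" by simp
qed
lemma incI: assumes "\<And>x y t. a \<le> x \<Longrightarrow> x < y \<Longrightarrow> y \<le> b \<Longrightarrow> \<forall>u\<in>{x..y}. P u \<Longrightarrow> x < t \<Longrightarrow> t < y \<Longrightarrow> F' t > 0"
  "\<And>t. P t \<Longrightarrow> f t = F t" "\<And>t. P t \<Longrightarrow> (F has_real_derivative F' t) (at t)"
  shows "inc_where f P a b"
  unfolding inc_where_def
proof (intro allI impI)
  fix x y assume h: "a \<le> x \<and> x < y \<and> y \<le> b \<and> (\<forall>t\<in>{x..y}. P t)"
  have "F x < F y" by (rule mvt_inc[of x y F F']) (use h assms in auto)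
  moreover have "f x = F x" "f y = F y" using h assms(2) by auto
  ultimately show "f x < f y" by simp
qed
lemma d1: assumes "1 + p^2 - 2 * p * cos t > (0::real)"
  shows "((\<lambda>x::real. ln (1 + p^2 - 2 * p * cos x)) has_real_derivative (2 * p * sin t / (1 + p^2 - 2 * p * cos t))) (at t)"
  using assms by (auto intro!: derivative_eq_intros simp: field_simps)
lemma d2: assumes "1 + p^2 + 2 * p * cos t > (0::real)"
  shows "((\<lambda>x::real. ln (1 + p^2 + 2 * p * cos x)) has_real_derivative (- 2 * p * sin t / (1 + p^2 + 2 * p * cos t))) (at t)"
  using assms by (auto intro!: derivative_eq_intros simp: field_simps)
lemma d3: assumes "4 + p^2 - 4 * p * cos t > (0::real)"
  shows "((\<lambda>x::real. ln (4 + p^2 - 4 * p * cos x)) has_real_derivative (4 * p * sin t / (4 + p^2 - 4 * p * cos t))) (at t)"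
  using assms by (auto intro!: derivative_eq_intros simp: field_simps)
lemma idF: fixes A B p s sn c :: real assumes "A \<noteq> 0" "B \<noteq> 0" "A = 1 + p^2 - 2 * p * c" "B = 1 + p^2 + 2 * p * c"
  shows "(1/2 - s/4)/2 * (2 * p * sn / A) + (1/2 + s/4)/2 * (- 2 * p * sn / B) = p * sn * (2 * p * c - (1 + p^2) * s / 2) / (A * B)"
proof -
  have "(1/2 - s/4)/2 * (2 * p * sn / A) + (1/2 + s/4)/2 * (- 2 * p * sn / B) = p * sn * ((1/2 - s/4) * B - (1/2 + s/4) * A) / (A * B)"
    using assms(1,2) by (simp add: field_simps)
  also have "(1/2 - s/4) * B - (1/2 + s/4) * A = 2 * p * c - (1 + p^2) * s / 2"
    unfolding assms(3,4) by (simp add: algebra_simps)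
  finally show ?thesis .
qed
lemma idG: fixes A B p a c sn cs :: real assumes "A \<noteq> 0" "B \<noteq> 0"
  shows "- (a/2 * (2 * p * sn / A) + c/2 * (4 * p * sn / B)) = - p * sn * (a * B + 2 * c * A) / (A * B)"
  using assms by (simp add: field_simps)
lemma dF: fixes p s :: real
  assumes "1 + p^2 - 2 * p * cos t > 0" "1 + p^2 + 2 * p * cos t > 0"
  shows "((\<lambda>x. (1/2 - s/4)/2 * ln (1 + p^2 - 2 * p * cos x) + (1/2 + s/4)/2 * ln (1 + p^2 + 2 * p * cos x) + K)
     has_real_derivative (p * sin t * (2 * p * cos t - (1 + p^2) * s / 2) / ((1 + p^2 - 2 * p * cos t) * (1 + p^2 + 2 * p * cos t)))) (at t)"
  using DERIV_add[OF DERIV_add[OF DERIV_cmult[OF d1[OF assms(1)]] DERIV_cmult[OF d2[OF assms(2)]]] DERIV_const, of "(1/2 - s/4)/2" "(1/2 + s/4)/2" K]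
    idF[of "1 + p^2 - 2 * p * cos t" "1 + p^2 + 2 * p * cos t" p "cos t" s "sin t"] assms
  by simp
lemma dG: fixes p a c :: real
  assumes "1 + p^2 - 2 * p * cos t > 0" "4 + p^2 - 4 * p * cos t > 0"
  shows "((\<lambda>x. - (a/2 * ln (1 + p^2 - 2 * p * cos x) + c/2 * ln (4 + p^2 - 4 * p * cos x) + K))
     has_real_derivative (- p * sin t * (a * (4 + p^2 - 4 * p * cos t) + 2 * c * (1 + p^2 - 2 * p * cos t)) / ((1 + p^2 - 2 * p * cos t) * (4 + p^2 - 4 * p * cos t)))) (at t)"
  using DERIV_minus[OF DERIV_add[OF DERIV_add[OF DERIV_cmult[OF d1[OF assms(1)]] DERIV_cmult[OF d3[OF assms(2)]]] DERIV_const, of "a/2" "c/2" K]]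
    idG[of "1 + p^2 - 2 * p * cos t" "4 + p^2 - 4 * p * cos t" a p "sin t" c] assms
  by simp
lemma Qid: fixes R r c :: real shows
  "6 * sqrt 2 - 4 + (3 * sqrt 2 + 2) * R\<^sup>2 + 16 * r + 4 * R\<^sup>2 * r - 8 * sqrt 2 * R * (1 + sqrt 2 * r) * c
   = 4 * ((sqrt 2 / 4 - 1/2 + r) * (4 + R^2 - 4 * R * c) + 2 * (1/2 + sqrt 2 / 4) * (1 + R^2 - 2 * R * c))"
proof -
  have s: "sqrt 2 * (sqrt 2 * x) = (2::real) * x" for x by (simp add: mult.assoc[symmetric])
  show ?thesis by (simp add: algebra_simps power2_eq_square s) (simp add: field_simps)
qed
lemma sgn3: fixes A B p sn D :: real assumes "A > 0" "B > 0"
  shows "(p * sn * D / (A * B) < 0 \<longleftrightarrow> p * sn * D < 0) \<and> (p * sn * D / (A * B) > 0 \<longleftrightarrow> p * sn * D > 0)"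
proof -
  have AB: "A * B > 0" using assms by simp
  show ?thesis by (simp add: pos_divide_less_eq[OF AB] pos_less_divide_eq[OF AB])
qed
lemma Cequiv: fixes p c :: real assumes "p > 0"
  shows "(c < (1 + p\<^sup>2) / (2 * sqrt 2 * p)) \<longleftrightarrow> (2 * p * c - (1 + p^2) * sqrt 2 / 2 < 0)"
proof -
  have "(1 + p\<^sup>2) / (2 * sqrt 2 * p) = (1 + p^2) * (1 / (2 * sqrt 2)) / p"
    by simp
  also have "\<dots> = (1 + p^2) * sqrt 2 / 4 / p" unfolding sq2 by simp
  finally have eq: "(1 + p\<^sup>2) / (2 * sqrt 2 * p) = (1 + p^2) * sqrt 2 / 4 / p" .
  have "c < (1 + p^2) * sqrt 2 / 4 / p \<longleftrightarrow> c * p < (1 + p^2) * sqrt 2 / 4" using assms by (simp add: pos_less_divide_eq mult.assoc mult.commute[of 4 p])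
  also have "\<dots> \<longleftrightarrow> 2 * p * c - (1 + p^2) * sqrt 2 / 2 < 0" by (simp add: algebra_simps)
  finally show ?thesis unfolding eq .
qed
lemma one_plus_one_minus: "1 + (1 - x) = (2::complex) - x" by simp

theorem lemma8p1:
  fixes r \<rho> R :: real
  assumes "\<rho> > 0" and "R > 0"
  defines "f \<equiv> (\<lambda>\<theta>. Re (g0 (of_real \<rho> * exp (\<i> * of_real \<theta>)) 0 r))"
      and "Z1 \<equiv> (\<lambda>\<theta>. of_real \<rho> * exp (\<i> * of_real \<theta>) \<notin> {0, 1, -1::complex})"
      and "C \<equiv> (\<lambda>\<theta>. cos \<theta> < (1 + \<rho>\<^sup>2) / (2 * sqrt 2 * \<rho>))"
      and "h \<equiv> (\<lambda>\<phi>. - Re (g0 (1 - of_real R * exp (- \<i> * of_real \<phi>)) 0 r))"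
      and "Z2 \<equiv> (\<lambda>\<phi>. 1 - of_real R * exp (- \<i> * of_real \<phi>) \<notin> {0, 1, -1::complex})"
      and "Q \<equiv> (\<lambda>\<phi>. 6 * sqrt 2 - 4 + (3 * sqrt 2 + 2) * R\<^sup>2 + 16 * r + 4 * R\<^sup>2 * r
                     - 8 * sqrt 2 * R * (1 + sqrt 2 * r) * cos \<phi>)"
  shows "dec_where f (\<lambda>\<theta>. C \<theta> \<and> Z1 \<theta>) 0 pi
       \<and> inc_where f (\<lambda>\<theta>. \<not> C \<theta> \<and> Z1 \<theta>) 0 pi
       \<and> inc_where f (\<lambda>\<theta>. C \<theta> \<and> Z1 \<theta>) pi (2 * pi)
       \<and> dec_where f (\<lambda>\<theta>. \<not> C \<theta> \<and> Z1 \<theta>) pi (2 * pi)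
       \<and> dec_where h (\<lambda>\<phi>. Q \<phi> > 0 \<and> Z2 \<phi>) 0 pi
       \<and> inc_where h (\<lambda>\<phi>. Q \<phi> < 0 \<and> Z2 \<phi>) 0 pi
       \<and> inc_where h (\<lambda>\<phi>. Q \<phi> > 0 \<and> Z2 \<phi>) pi (2 * pi)
       \<and> dec_where h (\<lambda>\<phi>. Q \<phi> < 0 \<and> Z2 \<phi>) pi (2 * pi)"
proof -
  define s where "s = sqrt 2"
  define A where "A = (\<lambda>t. 1 + \<rho>^2 - 2 * \<rho> * cos t)"
  define B where "B = (\<lambda>t. 1 + \<rho>^2 + 2 * \<rho> * cos t)"
  define A2 where "A2 = (\<lambda>t. 1 + R^2 - 2 * R * cos t)"
  define B2 where "B2 = (\<lambda>t. 4 + R^2 - 4 * R * cos t)"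
  define K0 where "K0 = r * ln (sqrt 2 + 1) - ln 2 / 2"
  define K1 where "K1 = (sqrt 2 / 4 - 1/2 + r) * ln \<rho> + K0"
  define K2 where "K2 = (1/2 - sqrt 2 / 4) * ln R + K0"
  define a where "a = sqrt 2 / 4 - 1/2 + r"
  define c where "c = 1/2 + sqrt 2 / 4"
  define F where "F = (\<lambda>x. (1/2 - s/4)/2 * ln (1 + \<rho>^2 - 2 * \<rho> * cos x) + (1/2 + s/4)/2 * ln (1 + \<rho>^2 + 2 * \<rho> * cos x) + K1)"
  define F' where "F' = (\<lambda>t. \<rho> * sin t * (2 * \<rho> * cos t - (1 + \<rho>^2) * s / 2) / (A t * B t))"
  define G where "G = (\<lambda>x. - (a/2 * ln (1 + R^2 - 2 * R * cos x) + c/2 * ln (4 + R^2 - 4 * R * cos x) + K2))"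
  define G' where "G' = (\<lambda>t. - R * sin t * (a * B2 t + 2 * c * A2 t) / (A2 t * B2 t))"
  have Z1pos: "A t > 0 \<and> B t > 0" if "Z1 t" for t
  proof -
    let ?z = "of_real \<rho> * exp (\<i> * of_real t)"
    have "1 - ?z \<noteq> 0" "1 + ?z \<noteq> 0" using that unfolding Z1_def by (auto simp: add_eq_0_iff)
    then have "(cmod (1 - ?z))^2 > 0" "(cmod (1 + ?z))^2 > 0" by auto
    then show ?thesis unfolding A_def B_def cm1 cm2 by auto
  qed
  have fF: "f t = F t" if "Z1 t" for t
  proof -
    let ?z = "of_real \<rho> * exp (\<i> * of_real t)"
    have nz: "1 - ?z \<noteq> 0" "1 + ?z \<noteq> 0" using that unfolding Z1_def by (auto simp: add_eq_0_iff)
    have e0: "ln (cmod ?z) = ln \<rho>" using cm0[OF assms(1)] by simp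
    have e1: "ln (cmod (1 - ?z)) = ln (1 + \<rho>^2 - 2 * \<rho> * cos t) / 2" using lnc[OF nz(1)] cm1 by simp
    have e2: "ln (cmod (1 + ?z)) = ln (1 + \<rho>^2 + 2 * \<rho> * cos t) / 2" using lnc[OF nz(2)] cm2 by simp
    have "f t = (sqrt 2 / 4 - 1/2 + r) * ln (cmod ?z) + (1/2 - sqrt 2 / 4) * ln (cmod (1 - ?z))
     + (1/2 + sqrt 2 / 4) * ln (cmod (1 + ?z)) + K0"
      unfolding f_def K0_def using Reg0[of ?z r] that unfolding Z1_def by simp
    also have "\<dots> = F t"
      unfolding F_def K1_def s_def e0 e1 e2 by (simp add: algebra_simps)
    finally show ?thesis .
  qed
  have dFt: "(F has_real_derivative F' t) (at t)" if "Z1 t" for t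
    unfolding F_def F'_def A_def B_def by (intro dF) (use Z1pos[OF that] in \<open>auto simp: A_def B_def\<close>)
  have Z2pos: "A2 t > 0 \<and> B2 t > 0" if "Z2 t" for t
  proof -
    let ?w = "1 - of_real R * exp (- \<i> * of_real t)"
    have "?w \<noteq> 0" "1 + ?w \<noteq> 0" using that unfolding Z2_def by (auto simp: add_eq_0_iff)
    then have "(cmod ?w)^2 > 0" "(cmod (2 - of_real R * exp (- \<i> * of_real t)))^2 > 0"
      by (auto simp: one_plus_one_minus)
    then show ?thesis unfolding A2_def B2_def cm1' cm3 by auto
  qed
  have hG: "h t = G t" if "Z2 t" for t
  proof -
    let ?w = "1 - of_real R * exp (- \<i> * of_real t)"
    have nz0: "?w \<noteq> 0" "1 + ?w \<noteq> 0" using that unfolding Z2_def by (auto simp: add_eq_0_iff)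
    have nz: "?w \<noteq> 0" "2 - of_real R * exp (- \<i> * of_real t) \<noteq> 0"
      using nz0 unfolding one_plus_one_minus by auto
    have e0: "ln (cmod (1 - ?w)) = ln R" using cm0'[OF assms(2)] by simp
    have e1: "ln (cmod ?w) = ln (1 + R^2 - 2 * R * cos t) / 2" using lnc[OF nz(1)] cm1' by simp
    have e2: "ln (cmod (1 + ?w)) = ln (4 + R^2 - 4 * R * cos t) / 2" using lnc[OF nz(2)] cm3 one_plus_one_minus by simp
    have "h t = - ((sqrt 2 / 4 - 1/2 + r) * ln (cmod ?w) + (1/2 - sqrt 2 / 4) * ln (cmod (1 - ?w))
     + (1/2 + sqrt 2 / 4) * ln (cmod (1 + ?w)) + K0)"
      unfolding h_def K0_def using Reg0[of ?w r] that unfolding Z2_def by simp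
    also have "\<dots> = G t"
      unfolding G_def K2_def a_def c_def e0 e1 e2 by (simp add: algebra_simps)
    finally show ?thesis .
  qed
  have dGt: "(G has_real_derivative G' t) (at t)" if "Z2 t" for t
    unfolding G_def G'_def A2_def B2_def by (intro dG) (use Z2pos[OF that] in \<open>auto simp: A2_def B2_def\<close>)
  have CD: "C t \<longleftrightarrow> 2 * \<rho> * cos t - (1 + \<rho>^2) * s / 2 < 0" for t
    unfolding C_def s_def using Cequiv[OF assms(1)] by blast
  have QE: "Q t = 4 * (a * B2 t + 2 * c * A2 t)" for t
    unfolding Q_def a_def c_def A2_def B2_def by (rule Qid)
  have mR: "- R < 0" using assms(2) by simp
  have s1: "dec_where f (\<lambda>\<theta>. C \<theta> \<and> Z1 \<theta>) 0 pi"
  proof (rule decI[where F=F and F'=F'])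
    fix x y t assume h: "0 \<le> x" "x < y" "y \<le> pi" "\<forall>u\<in>{x..y}. (\<lambda>\<theta>. C \<theta> \<and> Z1 \<theta>) u" "x < t" "t < y"
    then have Pt: "(\<lambda>\<theta>. C \<theta> \<and> Z1 \<theta>) t" by auto
    have sn: "sin t > 0" using h by (intro sin_gt_zero) auto
    have Dt: "(2 * \<rho> * cos t - (1 + \<rho>^2) * s / 2) < 0" using CD Pt by blast
    have ab: "A t > 0 \<and> B t > 0" using Z1pos Pt by blast
    have "\<rho> * sin t * (2 * \<rho> * cos t - (1 + \<rho>^2) * s / 2) < 0" by (rule mult_pos_neg[OF mult_pos_pos[OF assms(1) sn] Dt])
    then show "F' t < 0" unfolding F'_def using sgn3[of "A t" "B t" \<rho> "sin t" "(2 * \<rho> * cos t - (1 + \<rho>^2) * s / 2)"] ab by blast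
  next
    fix t assume "(\<lambda>\<theta>. C \<theta> \<and> Z1 \<theta>) t" then show "f t = F t" using fF by blast
  next
    fix t assume "(\<lambda>\<theta>. C \<theta> \<and> Z1 \<theta>) t" then show "(F has_real_derivative F' t) (at t)" using dFt by blast
  qed
  have s2: "inc_where f (\<lambda>\<theta>. \<not> C \<theta> \<and> Z1 \<theta>) 0 pi"
  proof (rule incI[where F=F and F'=F'])
    fix x y t assume h: "0 \<le> x" "x < y" "y \<le> pi" "\<forall>u\<in>{x..y}. (\<lambda>\<theta>. \<not> C \<theta> \<and> Z1 \<theta>) u" "x < t" "t < y"
    then have Pt: "(\<lambda>\<theta>. \<not> C \<theta> \<and> Z1 \<theta>) t" by auto
    have sn: "sin t > 0" using h by (intro sin_gt_zero) auto
    have "cos t > cos y" using h by (intro cos_monotone_0_pi) auto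
    moreover have "\<not> C y" using h by auto
    ultimately have Dt: "(2 * \<rho> * cos t - (1 + \<rho>^2) * s / 2) > 0" using CD[of y] assms(1) by (smt (verit) mult_strict_left_mono)
    have ab: "A t > 0 \<and> B t > 0" using Z1pos Pt by blast
    have "\<rho> * sin t * (2 * \<rho> * cos t - (1 + \<rho>^2) * s / 2) > 0" by (rule mult_pos_pos[OF mult_pos_pos[OF assms(1) sn] Dt])
    then show "F' t > 0" unfolding F'_def using sgn3[of "A t" "B t" \<rho> "sin t" "(2 * \<rho> * cos t - (1 + \<rho>^2) * s / 2)"] ab by blast
  next
    fix t assume "(\<lambda>\<theta>. \<not> C \<theta> \<and> Z1 \<theta>) t" then show "f t = F t" using fF by blast
  next
    fix t assume "(\<lambda>\<theta>. \<not> C \<theta> \<and> Z1 \<theta>) t" then show "(F has_real_derivative F' t) (at t)" using dFt by blast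
  qed
  have s3: "inc_where f (\<lambda>\<theta>. C \<theta> \<and> Z1 \<theta>) pi (2 * pi)"
  proof (rule incI[where F=F and F'=F'])
    fix x y t assume h: "pi \<le> x" "x < y" "y \<le> (2 * pi)" "\<forall>u\<in>{x..y}. (\<lambda>\<theta>. C \<theta> \<and> Z1 \<theta>) u" "x < t" "t < y"
    then have Pt: "(\<lambda>\<theta>. C \<theta> \<and> Z1 \<theta>) t" by auto
    have sn: "sin t < 0" using h by (intro sin_lt_zero) auto
    have Dt: "(2 * \<rho> * cos t - (1 + \<rho>^2) * s / 2) < 0" using CD Pt by blast
    have ab: "A t > 0 \<and> B t > 0" using Z1pos Pt by blast
    have "\<rho> * sin t * (2 * \<rho> * cos t - (1 + \<rho>^2) * s / 2) > 0" by (rule mult_neg_neg[OF mult_pos_neg[OF assms(1) sn] Dt])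
    then show "F' t > 0" unfolding F'_def using sgn3[of "A t" "B t" \<rho> "sin t" "(2 * \<rho> * cos t - (1 + \<rho>^2) * s / 2)"] ab by blast
  next
    fix t assume "(\<lambda>\<theta>. C \<theta> \<and> Z1 \<theta>) t" then show "f t = F t" using fF by blast
  next
    fix t assume "(\<lambda>\<theta>. C \<theta> \<and> Z1 \<theta>) t" then show "(F has_real_derivative F' t) (at t)" using dFt by blast
  qed
  have s4: "dec_where f (\<lambda>\<theta>. \<not> C \<theta> \<and> Z1 \<theta>) pi (2 * pi)"
  proof (rule decI[where F=F and F'=F'])
    fix x y t assume h: "pi \<le> x" "x < y" "y \<le> (2 * pi)" "\<forall>u\<in>{x..y}. (\<lambda>\<theta>. \<not> C \<theta> \<and> Z1 \<theta>) u" "x < t" "t < y"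
    then have Pt: "(\<lambda>\<theta>. \<not> C \<theta> \<and> Z1 \<theta>) t" by auto
    have sn: "sin t < 0" using h by (intro sin_lt_zero) auto
    have "cos t > cos x" using h by (intro cos_pi_2pi) auto
    moreover have "\<not> C x" using h by auto
    ultimately have Dt: "(2 * \<rho> * cos t - (1 + \<rho>^2) * s / 2) > 0" using CD[of x] assms(1) by (smt (verit) mult_strict_left_mono)
    have ab: "A t > 0 \<and> B t > 0" using Z1pos Pt by blast
    have "\<rho> * sin t * (2 * \<rho> * cos t - (1 + \<rho>^2) * s / 2) < 0" by (rule mult_neg_pos[OF mult_pos_neg[OF assms(1) sn] Dt])
    then show "F' t < 0" unfolding F'_def using sgn3[of "A t" "B t" \<rho> "sin t" "(2 * \<rho> * cos t - (1 + \<rho>^2) * s / 2)"] ab by blast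
  next
    fix t assume "(\<lambda>\<theta>. \<not> C \<theta> \<and> Z1 \<theta>) t" then show "f t = F t" using fF by blast
  next
    fix t assume "(\<lambda>\<theta>. \<not> C \<theta> \<and> Z1 \<theta>) t" then show "(F has_real_derivative F' t) (at t)" using dFt by blast
  qed
  have s5: "dec_where h (\<lambda>\<phi>. Q \<phi> > 0 \<and> Z2 \<phi>) 0 pi"
  proof (rule decI[where F=G and F'=G'])
    fix x y t assume h: "0 \<le> x" "x < y" "y \<le> pi" "\<forall>u\<in>{x..y}. (\<lambda>\<phi>. Q \<phi> > 0 \<and> Z2 \<phi>) u" "x < t" "t < y"
    then have Pt: "(\<lambda>\<phi>. Q \<phi> > 0 \<and> Z2 \<phi>) t" by auto
    have sn: "sin t > 0" using h by (intro sin_gt_zero) auto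
    have Et: "(a * B2 t + 2 * c * A2 t) > 0" using QE[of t] Pt by simp
    have ab: "A2 t > 0 \<and> B2 t > 0" using Z2pos Pt by blast
    have "- R * sin t * (a * B2 t + 2 * c * A2 t) < 0" by (rule mult_neg_pos[OF mult_neg_pos[OF mR sn] Et])
    then show "G' t < 0" unfolding G'_def using sgn3[of "A2 t" "B2 t" "- R" "sin t" "(a * B2 t + 2 * c * A2 t)"] ab by blast
  next
    fix t assume "(\<lambda>\<phi>. Q \<phi> > 0 \<and> Z2 \<phi>) t" then show "h t = G t" using hG by blast
  next
    fix t assume "(\<lambda>\<phi>. Q \<phi> > 0 \<and> Z2 \<phi>) t" then show "(G has_real_derivative G' t) (at t)" using dGt by blast
  qed
  have s6: "inc_where h (\<lambda>\<phi>. Q \<phi> < 0 \<and> Z2 \<phi>) 0 pi"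
  proof (rule incI[where F=G and F'=G'])
    fix x y t assume h: "0 \<le> x" "x < y" "y \<le> pi" "\<forall>u\<in>{x..y}. (\<lambda>\<phi>. Q \<phi> < 0 \<and> Z2 \<phi>) u" "x < t" "t < y"
    then have Pt: "(\<lambda>\<phi>. Q \<phi> < 0 \<and> Z2 \<phi>) t" by auto
    have sn: "sin t > 0" using h by (intro sin_gt_zero) auto
    have Et: "(a * B2 t + 2 * c * A2 t) < 0" using QE[of t] Pt by simp
    have ab: "A2 t > 0 \<and> B2 t > 0" using Z2pos Pt by blast
    have "- R * sin t * (a * B2 t + 2 * c * A2 t) > 0" by (rule mult_neg_neg[OF mult_neg_pos[OF mR sn] Et])
    then show "G' t > 0" unfolding G'_def using sgn3[of "A2 t" "B2 t" "- R" "sin t" "(a * B2 t + 2 * c * A2 t)"] ab by blast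
  next
    fix t assume "(\<lambda>\<phi>. Q \<phi> < 0 \<and> Z2 \<phi>) t" then show "h t = G t" using hG by blast
  next
    fix t assume "(\<lambda>\<phi>. Q \<phi> < 0 \<and> Z2 \<phi>) t" then show "(G has_real_derivative G' t) (at t)" using dGt by blast
  qed
  have s7: "inc_where h (\<lambda>\<phi>. Q \<phi> > 0 \<and> Z2 \<phi>) pi (2 * pi)"
  proof (rule incI[where F=G and F'=G'])
    fix x y t assume h: "pi \<le> x" "x < y" "y \<le> (2 * pi)" "\<forall>u\<in>{x..y}. (\<lambda>\<phi>. Q \<phi> > 0 \<and> Z2 \<phi>) u" "x < t" "t < y"
    then have Pt: "(\<lambda>\<phi>. Q \<phi> > 0 \<and> Z2 \<phi>) t" by auto
    have sn: "sin t < 0" using h by (intro sin_lt_zero) auto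
    have Et: "(a * B2 t + 2 * c * A2 t) > 0" using QE[of t] Pt by simp
    have ab: "A2 t > 0 \<and> B2 t > 0" using Z2pos Pt by blast
    have "- R * sin t * (a * B2 t + 2 * c * A2 t) > 0" by (rule mult_pos_pos[OF mult_neg_neg[OF mR sn] Et])
    then show "G' t > 0" unfolding G'_def using sgn3[of "A2 t" "B2 t" "- R" "sin t" "(a * B2 t + 2 * c * A2 t)"] ab by blast
  next
    fix t assume "(\<lambda>\<phi>. Q \<phi> > 0 \<and> Z2 \<phi>) t" then show "h t = G t" using hG by blast
  next
    fix t assume "(\<lambda>\<phi>. Q \<phi> > 0 \<and> Z2 \<phi>) t" then show "(G has_real_derivative G' t) (at t)" using dGt by blast
  qed
  have s8: "dec_where h (\<lambda>\<phi>. Q \<phi> < 0 \<and> Z2 \<phi>) pi (2 * pi)"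
  proof (rule decI[where F=G and F'=G'])
    fix x y t assume h: "pi \<le> x" "x < y" "y \<le> (2 * pi)" "\<forall>u\<in>{x..y}. (\<lambda>\<phi>. Q \<phi> < 0 \<and> Z2 \<phi>) u" "x < t" "t < y"
    then have Pt: "(\<lambda>\<phi>. Q \<phi> < 0 \<and> Z2 \<phi>) t" by auto
    have sn: "sin t < 0" using h by (intro sin_lt_zero) auto
    have Et: "(a * B2 t + 2 * c * A2 t) < 0" using QE[of t] Pt by simp
    have ab: "A2 t > 0 \<and> B2 t > 0" using Z2pos Pt by blast
    have "- R * sin t * (a * B2 t + 2 * c * A2 t) < 0" by (rule mult_pos_neg[OF mult_neg_neg[OF mR sn] Et])
    then show "G' t < 0" unfolding G'_def using sgn3[of "A2 t" "B2 t" "- R" "sin t" "(a * B2 t + 2 * c * A2 t)"] ab by blast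
  next
    fix t assume "(\<lambda>\<phi>. Q \<phi> < 0 \<and> Z2 \<phi>) t" then show "h t = G t" using hG by blast
  next
    fix t assume "(\<lambda>\<phi>. Q \<phi> < 0 \<and> Z2 \<phi>) t" then show "(G has_real_derivative G' t) (at t)" using dGt by blast
  qed
  show ?thesis using s1 s2 s3 s4 s5 s6 s7 s8 by blast
qed
end
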